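(* Let $G$ be a connected (finite, simple) graph, let $\mathcal{F}$ be a maximum induced forest of $G$ having the fewest connected components among all maximum induced forests of $G$, let $H$ be the contracted graph and let $B$ be a skeleton of $H$ whose configuration vector is lexicographically highest among all skeletons of $H$, with inner skeleton $B_1$ (all as defined in the context). Let $v$ be a non-tree vertex of degree exactly $2$ in $B_1$ whose two neighbors in $B_1$ are a tree vertex $x_T$ and a vertex $x'$, where the tree $T$ consists of a single edge $u_1u_2$. If $v$ has no 2-edge in $H$ to any tree vertex other than $x_T$, then $v$ has no edge in $H$ to any tree vertex other than $x_T$.
   Context: A maximum induced forest of $G$ is an induced forest with the maximum number of vertices. Let $\mathcal{T}$ be the set of connected components (trees) of $\mathcal{F}$ and $S=V(G)\setminus V(\mathcal{F})$. The graph $H$ has vertex set $\{x_T : T\in\mathcal{T}\}\cup S$ (the $x_T$ are tree vertices, the vertices of $S$ non-tree vertices) and edge set consisting of all edges of $G[S]$ together with all pairs $ux_T$ with $u\in S$, $T\in\mathcal{T}$ such that $u$ has at least one neighbor in $V(T)$ in $G$. An edge $ux_T$ of $H$ is a 2-edge if $u$ has at least two neighbors in $V(T)$ in $G$; all other edges of $H$ are 1-edges. A skeleton is a spanning tree of $H$ rooted at some tree vertex, with all edges directed towards the root. For a skeleton $B$ with root $r$, the level $\ell_B(v)$ of a vertex $v$ is the number of vertices on the path from $v$ to $r$ in $B$, and the configuration vector of $B$ is $\langle |E_2(B)|, \sum_{v:\ell_B(v)=1}\deg_B(v), \ldots,\sum_{v:\ell_B(v)=|V(H)|}\deg_B(v)\rangle$,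 where $E_2(B)$ is the set of 2-edges of $B$ and $\deg_B(v)$ the total degree of $v$ in $B$. Let $L_S$ be the set of vertices of $S$ that are leaves of $B$; the inner skeleton is $B_1=B[V(B)\setminus L_S]$. *)

theory Defs
  imports Main
begin

definition simple_graph :: "'a set \<Rightarrow> ('a \<Rightarrow> 'a \<Rightarrow> bool) \<Rightarrow> bool" where
  "simple_graph V adj \<longleftrightarrow> finite V \<and>
     (\<forall>u w. adj u w \<longrightarrow> u \<in> V \<and> w \<in> V \<and> u \<noteq> w \<and> adj w u)"

definition walk_in :: "'a set \<Rightarrow> ('a \<Rightarrow> 'a \<Rightarrow> bool) \<Rightarrow> 'a list \<Rightarrow> bool" where
  "walk_in X adj p \<longleftrightarrow> p \<noteq> [] \<and> set p \<subseteq> X \<and>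
     (\<forall>i. Suc i < length p \<longrightarrow> adj (p ! i) (p ! Suc i))"

definition connected_on :: "'a set \<Rightarrow> ('a \<Rightarrow> 'a \<Rightarrow> bool) \<Rightarrow> bool" where
  "connected_on X adj \<longleftrightarrow> X \<noteq> {} \<and>
     (\<forall>u\<in>X. \<forall>w\<in>X. \<exists>p. walk_in X adj p \<and> hd p = u \<and> last p = w)"

definition has_cycle :: "'a set \<Rightarrow> ('a \<Rightarrow> 'a \<Rightarrow> bool) \<Rightarrow> bool" where
  "has_cycle X adj \<longleftrightarrow> (\<exists>c. length c \<ge> 3 \<and> distinct c \<and> set c \<subseteq> X \<and>
     (\<forall>i<length c. adj (c ! i) (c ! ((i + 1) mod length c))))"

definition forest_on :: "'a set \<Rightarrow> ('a \<Rightarrow> 'a \<Rightarrow> bool) \<Rightarrow> bool" where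
  "forest_on X adj \<longleftrightarrow> \<not> has_cycle X adj"

definition tree_on :: "'a set \<Rightarrow> ('a \<Rightarrow> 'a \<Rightarrow> bool) \<Rightarrow> bool" where
  "tree_on X adj \<longleftrightarrow> connected_on X adj \<and> forest_on X adj"

definition components :: "'a set \<Rightarrow> ('a \<Rightarrow> 'a \<Rightarrow> bool) \<Rightarrow> 'a set set" where
  "components X adj =
     {{w \<in> X. \<exists>p. walk_in X adj p \<and> hd p = u \<and> last p = w} | u. u \<in> X}"

definition induced_forest :: "'a set \<Rightarrow> ('a \<Rightarrow> 'a \<Rightarrow> bool) \<Rightarrow> 'a set \<Rightarrow> bool" where
  "induced_forest V adj F \<longleftrightarrow> F \<subseteq> V \<and> forest_on F adj"

definition max_induced_forest :: "'a set \<Rightarrow> ('a \<Rightarrow> 'a \<Rightarrow> bool) \<Rightarrow> 'a set \<Rightarrow> bool" where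
  "max_induced_forest V adj F \<longleftrightarrow> induced_forest V adj F \<and>
     (\<forall>F'. induced_forest V adj F' \<longrightarrow> card F' \<le> card F)"

definition min_comp_max_forest :: "'a set \<Rightarrow> ('a \<Rightarrow> 'a \<Rightarrow> bool) \<Rightarrow> 'a set \<Rightarrow> bool" where
  "min_comp_max_forest V adj F \<longleftrightarrow> max_induced_forest V adj F \<and>
     (\<forall>F'. max_induced_forest V adj F' \<longrightarrow>
        card (components F adj) \<le> card (components F' adj))"

text \<open>Vertices of the contracted graph H: tree vertices x_T (represented by V(T)) and
non-tree vertices (elements of S = V - F).\<close>
datatype 'a hvert = TreeV "'a set" | NonTreeV 'a

definition Hverts :: "'a set \<Rightarrow> ('a \<Rightarrow> 'a \<Rightarrow> bool) \<Rightarrow> 'a set \<Rightarrow> 'a hvert set" where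
  "Hverts V adj F = TreeV ` components F adj \<union> NonTreeV ` (V - F)"

fun Hadj :: "'a set \<Rightarrow> ('a \<Rightarrow> 'a \<Rightarrow> bool) \<Rightarrow> 'a set \<Rightarrow> 'a hvert \<Rightarrow> 'a hvert \<Rightarrow> bool" where
  "Hadj V adj F (NonTreeV u) (NonTreeV w) = (u \<in> V - F \<and> w \<in> V - F \<and> adj u w)"
| "Hadj V adj F (NonTreeV u) (TreeV C) =
     (u \<in> V - F \<and> C \<in> components F adj \<and> (\<exists>w\<in>C. adj u w))"
| "Hadj V adj F (TreeV C) (NonTreeV u) =
     (u \<in> V - F \<and> C \<in> components F adj \<and> (\<exists>w\<in>C. adj u w))"
| "Hadj V adj F (TreeV C) (TreeV D) = False"

fun two_edge :: "'a set \<Rightarrow> ('a \<Rightarrow> 'a \<Rightarrow> bool) \<Rightarrow> 'a set \<Rightarrow> 'a hvert \<Rightarrow> 'a hvert \<Rightarrow> bool" where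
  "two_edge V adj F (NonTreeV u) (TreeV C) =
     (Hadj V adj F (NonTreeV u) (TreeV C) \<and> card {w \<in> C. adj u w} \<ge> 2)"
| "two_edge V adj F (TreeV C) (NonTreeV u) =
     (Hadj V adj F (NonTreeV u) (TreeV C) \<and> card {w \<in> C. adj u w} \<ge> 2)"
| "two_edge V adj F x y = False"

definition skeleton :: "'a set \<Rightarrow> ('a \<Rightarrow> 'a \<Rightarrow> bool) \<Rightarrow> 'a set \<Rightarrow>
    ('a hvert \<Rightarrow> 'a hvert \<Rightarrow> bool) \<Rightarrow> 'a hvert \<Rightarrow> bool" where
  "skeleton V adj F B r \<longleftrightarrow>
     (\<forall>x y. B x y \<longrightarrow> Hadj V adj F x y) \<and> (\<forall>x y. B x y \<longrightarrow> B y x) \<and>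
     tree_on (Hverts V adj F) B \<and> r \<in> TreeV ` components F adj"

text \<open>Level: number of vertices on the (unique) path from v to r in B.\<close>
definition level :: "'b set \<Rightarrow> ('b \<Rightarrow> 'b \<Rightarrow> bool) \<Rightarrow> 'b \<Rightarrow> 'b \<Rightarrow> nat" where
  "level X B r v = (LEAST n. \<exists>p. walk_in X B p \<and> distinct p \<and> hd p = v \<and> last p = r \<and> length p = n)"

definition bdeg :: "'b set \<Rightarrow> ('b \<Rightarrow> 'b \<Rightarrow> bool) \<Rightarrow> 'b \<Rightarrow> nat" where
  "bdeg X B v = card {w \<in> X. B v w}"

definition conf_vec :: "'a set \<Rightarrow> ('a \<Rightarrow> 'a \<Rightarrow> bool) \<Rightarrow> 'a set \<Rightarrow>
    ('a hvert \<Rightarrow> 'a hvert \<Rightarrow> bool) \<Rightarrow> 'a hvert \<Rightarrow> nat list" where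
  "conf_vec V adj F B r =
     (let X = Hverts V adj F in
       card {{x, y} | x y. B x y \<and> two_edge V adj F x y} #
       map (\<lambda>i. \<Sum>v\<in>{v \<in> X. level X B r v = i}. bdeg X B v) [1..<card X + 1])"

definition lex_highest_skeleton :: "'a set \<Rightarrow> ('a \<Rightarrow> 'a \<Rightarrow> bool) \<Rightarrow> 'a set \<Rightarrow>
    ('a hvert \<Rightarrow> 'a hvert \<Rightarrow> bool) \<Rightarrow> 'a hvert \<Rightarrow> bool" where
  "lex_highest_skeleton V adj F B r \<longleftrightarrow> skeleton V adj F B r \<and>
     (\<forall>B' r'. skeleton V adj F B' r' \<longrightarrow>
        (conf_vec V adj F B r, conf_vec V adj F B' r') \<notin> lexord {(a, b). a < b})"

text \<open>Vertex set of the inner skeleton B_1: remove the non-tree leaves of B.\<close>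
definition inner_verts :: "'a set \<Rightarrow> ('a \<Rightarrow> 'a \<Rightarrow> bool) \<Rightarrow> 'a set \<Rightarrow>
    ('a hvert \<Rightarrow> 'a hvert \<Rightarrow> bool) \<Rightarrow> 'a hvert set" where
  "inner_verts V adj F B =
     Hverts V adj F - {x \<in> NonTreeV ` (V - F). bdeg (Hverts V adj F) B x = 1}"

end

theory Submission
  imports Defs
begin

definition reach :: "'a set \<Rightarrow> ('a \<Rightarrow> 'a \<Rightarrow> bool) \<Rightarrow> 'a \<Rightarrow> 'a \<Rightarrow> bool" where
  "reach X adj u w \<longleftrightarrow> (\<exists>p. walk_in X adj p \<and> hd p = u \<and> last p = w)"

definition comp :: "'a set \<Rightarrow> ('a \<Rightarrow> 'a \<Rightarrow> bool) \<Rightarrow> 'a \<Rightarrow> 'a set" where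
  "comp X adj u = {w \<in> X. reach X adj u w}"

definition RR :: "'a set \<Rightarrow> ('a \<Rightarrow> 'a \<Rightarrow> bool) \<Rightarrow> 'a \<Rightarrow> 'a \<Rightarrow> bool" where
  "RR X adj a b \<longleftrightarrow> adj a b \<and> a \<in> X \<and> b \<in> X"

lemma components_eq: "components X adj = comp X adj ` X"
  by (auto simp: components_def comp_def reach_def)

lemma walk_in_Cons: "walk_in X adj (a # p) \<longleftrightarrow> a \<in> X \<and> (p = [] \<or> (adj a (hd p) \<and> walk_in X adj p))"
proof
  assume h: "walk_in X adj (a # p)"
  show "a \<in> X \<and> (p = [] \<or> (adj a (hd p) \<and> walk_in X adj p))"
  proof (cases p)
    case Nil then show ?thesis using h by (auto simp: walk_in_def)
  next
    case (Cons b q)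
    have l: "Suc 0 < length (a # p)" using Cons by simp
    have "adj ((a # p) ! 0) ((a # p) ! Suc 0)" using h l unfolding walk_in_def by blast
    then have "adj a b" using Cons by simp
    moreover have "walk_in X adj p" unfolding walk_in_def
    proof (intro conjI allI impI)
      fix i assume "Suc i < length p"
      then have "Suc (Suc i) < length (a # p)" by simp
      then have "adj ((a # p) ! Suc i) ((a # p) ! Suc (Suc i))" using h unfolding walk_in_def by blast
      then show "adj (p ! i) (p ! Suc i)" by simp
    qed (use h Cons in \<open>auto simp: walk_in_def\<close>)
    ultimately show ?thesis using h Cons by (auto simp: walk_in_def)
  qed
next
  assume h: "a \<in> X \<and> (p = [] \<or> (adj a (hd p) \<and> walk_in X adj p))"
  show "walk_in X adj (a # p)"
  proof (cases p)
    case Nil then show ?thesis using h by (auto simp: walk_in_def)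
  next
    case (Cons b q)
    show ?thesis unfolding walk_in_def
    proof (intro conjI allI impI)
      fix i assume i: "Suc i < length (a # p)"
      show "adj ((a # p) ! i) ((a # p) ! Suc i)"
        using h Cons i by (cases i) (auto simp: walk_in_def)
    qed (use h Cons in \<open>auto simp: walk_in_def\<close>)
  qed
qed

lemma reach_iff: "reach X adj u w \<longleftrightarrow> u \<in> X \<and> (RR X adj)\<^sup>*\<^sup>* u w"
proof
  assume "reach X adj u w"
  then obtain p where p: "walk_in X adj p" "hd p = u" "last p = w" by (auto simp: reach_def)
  have "u \<in> X \<and> (RR X adj)\<^sup>*\<^sup>* u w" using p
  proof (induction p arbitrary: u)
    case Nil then show ?case by (simp add: walk_in_def)
  next
    case (Cons a p)
    show ?case
    proof (cases p)
      case Nil then show ?thesis using Cons.prems by (simp add: walk_in_Cons)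
    next
      case (Cons b q)
      have "hd p \<in> X \<and> (RR X adj)\<^sup>*\<^sup>* (hd p) w"
        using Cons.IH[of "hd p"] Cons.prems Cons by (simp add: walk_in_Cons)
      moreover have "RR X adj a (hd p)" using Cons.prems Cons calculation by (simp add: walk_in_Cons RR_def)
      moreover have "u = a" "a \<in> X" using Cons.prems by (auto simp: walk_in_Cons)
      ultimately show ?thesis using converse_rtranclp_into_rtranclp[of "RR X adj" a "hd p" w] by simp
    qed
  qed
  then show "u \<in> X \<and> (RR X adj)\<^sup>*\<^sup>* u w" .
next
  assume h: "u \<in> X \<and> (RR X adj)\<^sup>*\<^sup>* u w"
  then have "(RR X adj)\<^sup>*\<^sup>* u w" by simp
  then show "reach X adj u w" using h
  proof (induction rule: converse_rtranclp_induct)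
    case base then show ?case unfolding reach_def by (intro exI[of _ "[w]"]) (simp add: walk_in_def)
  next
    case (step y z)
    then have "z \<in> X" by (simp add: RR_def)
    then obtain p where p: "walk_in X adj p" "hd p = z" "last p = w" using step by (auto simp: reach_def)
    have "walk_in X adj (y # p)" using p step by (auto simp: walk_in_Cons RR_def)
    then show ?case unfolding reach_def using p by (intro exI[of _ "y # p"]) (auto simp: walk_in_def)
  qed
qed

lemma reach_in: "reach X adj u w \<Longrightarrow> u \<in> X \<and> w \<in> X"
proof -
  assume "reach X adj u w"
  then obtain p where p: "p \<noteq> []" "set p \<subseteq> X" "hd p = u" "last p = w"
    unfolding reach_def walk_in_def by blast
  have "hd p \<in> set p" "last p \<in> set p" using p(1) by simp_all
  then show ?thesis using p by auto
qed

lemma reach_refl: "u \<in> X \<Longrightarrow> reach X adj u u"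
  by (simp add: reach_iff)

lemma reach_trans: "reach X adj u x \<Longrightarrow> reach X adj x w \<Longrightarrow> reach X adj u w"
  by (auto simp: reach_iff)

lemma reach_sym:
  assumes sym: "\<forall>a b. adj a b \<longrightarrow> adj b a" and h: "reach X adj u w"
  shows "reach X adj w u"
proof -
  have "(RR X adj)\<^sup>*\<^sup>* u w" using h by (simp add: reach_iff)
  then have "(RR X adj)\<^sup>*\<^sup>* w u"
  proof (induction rule: rtranclp_induct)
    case (step y z)
    then have "RR X adj z y" using sym by (auto simp: RR_def)
    then show ?case using step.IH by (rule converse_rtranclp_into_rtranclp)
  qed simp
  then show ?thesis using reach_in[OF h] by (auto simp: reach_iff)
qed

lemma reach_edge: "adj a b \<Longrightarrow> a \<in> X \<Longrightarrow> b \<in> X \<Longrightarrow> reach X adj a b"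
  by (auto simp: reach_iff RR_def)

lemma reach_mono: "reach X adj u w \<Longrightarrow> X \<subseteq> Y \<Longrightarrow> reach Y adj u w"
proof -
  assume h: "reach X adj u w" and s: "X \<subseteq> Y"
  have "(RR X adj)\<^sup>*\<^sup>* u w" using h by (simp add: reach_iff)
  then have "(RR Y adj)\<^sup>*\<^sup>* u w"
    by (induction rule: rtranclp_induct) (use s in \<open>auto simp: RR_def intro: rtranclp.rtrancl_into_rtrancl\<close>)
  then show ?thesis using h s reach_in by (auto simp: reach_iff)
qed

lemma reach_restrict:
  assumes h: "reach X adj u w" and s: "comp X adj u \<subseteq> Y"
  shows "reach Y adj u w"
proof -
  have uX: "u \<in> X" using reach_in[OF h] by simp
  have "(RR X adj)\<^sup>*\<^sup>* u w" using h by (simp add: reach_iff)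
  then have "(RR Y adj)\<^sup>*\<^sup>* u w \<and> reach X adj u w"
  proof (induction rule: rtranclp_induct)
    case base then show ?case using uX by (simp add: reach_refl)
  next
    case (step y z)
    have "reach X adj y z" using step.hyps(2) by (simp add: RR_def reach_edge)
    moreover have "reach X adj u y" using step.IH by simp
    ultimately have "reach X adj u z" using reach_trans by metis
    moreover have "y \<in> Y"
    proof -
      have "y \<in> X" using reach_in[of X adj u y] step.IH by blast
      then have "y \<in> comp X adj u" using step.IH by (simp add: comp_def)
      then show ?thesis using s by blast
    qed
    moreover have "z \<in> Y"
    proof -
      have "z \<in> X" using step.hyps(2) by (simp add: RR_def)
      then have "z \<in> comp X adj u" using calculation(1) by (simp add: comp_def)
      then show ?thesis using s by blast
    qed
    moreover have "adj y z" using step.hyps(2) by (simp add: RR_def)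
    ultimately have "RR Y adj y z" by (simp add: RR_def)
    then show ?case using step.IH \<open>reach X adj u z\<close> by (meson rtranclp.rtrancl_into_rtrancl)
  qed
  moreover have "u \<in> Y" using s uX reach_refl[OF uX] by (auto simp: comp_def)
  ultimately show ?thesis by (simp add: reach_iff)
qed

lemma comp_eq:
  assumes sym: "\<forall>a b. adj a b \<longrightarrow> adj b a" and h: "reach X adj u w"
  shows "comp X adj u = comp X adj w"
proof -
  have r: "reach X adj w u" using reach_sym[OF sym h] .
  show ?thesis
  proof (rule set_eqI)
    fix x
    have "reach X adj u x \<longleftrightarrow> reach X adj w x"
    proof
      assume "reach X adj u x" then show "reach X adj w x" by (rule reach_trans[OF r])
    next
      assume "reach X adj w x" then show "reach X adj u x" by (rule reach_trans[OF h])
    qed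
    then show "x \<in> comp X adj u \<longleftrightarrow> x \<in> comp X adj w" by (simp add: comp_def)
  qed
qed

lemma comp_mem:
  assumes sym: "\<forall>a b. adj a b \<longrightarrow> adj b a" and C: "C \<in> components X adj" and x: "x \<in> C"
  shows "C = comp X adj x"
proof -
  obtain u where u: "u \<in> X" "C = comp X adj u" using C by (auto simp: components_eq)
  then have "reach X adj u x" using x by (auto simp: comp_def)
  then show ?thesis using comp_eq[OF sym, of X u x] u by simp
qed

lemma comp_self: "u \<in> X \<Longrightarrow> u \<in> comp X adj u"
  by (simp add: comp_def reach_refl)

lemma comp_sub: "comp X adj u \<subseteq> X" by (auto simp: comp_def)


lemma mod_ne_aux:
  fixes k n j :: nat
  assumes "k < n" "n \<ge> 3" "j < n - 1"
  shows "(k + 1 + j) mod n \<noteq> k"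
proof (cases "k + 1 + j < n")
  case True then show ?thesis by simp
next
  case False
  then have e: "(k + 1 + j) mod n = (k + 1 + j - n) mod n" by (simp add: le_mod_geq)
  have "k + 1 + j - n < n" using assms by linarith
  then have "(k + 1 + j) mod n = k + 1 + j - n" using e by simp
  moreover have "k + 1 + j - n \<noteq> k" using assms False by linarith
  ultimately show ?thesis by simp
qed

lemma mod_ne_aux2:
  fixes k n :: nat
  assumes "k < n" "n \<ge> 3"
  shows "(k + 1) mod n \<noteq> (k + n - 1) mod n"
proof -
  have a: "(k + n - 1) mod n = (if k = 0 then n - 1 else k - 1)"
  proof (cases "k = 0")
    case True then show ?thesis using assms by simp
  next
    case False
    then have "(k + n - 1) mod n = (k - 1 + n) mod n" by (simp add: algebra_simps)
    also have "\<dots> = (k - 1) mod n" by simp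
    also have "\<dots> = k - 1" using assms by simp
    finally show ?thesis using False by simp
  qed
  have b: "(k + 1) mod n = (if k + 1 = n then 0 else k + 1)"
    using assms by (cases "k + 1 = n") simp_all
  show ?thesis unfolding a b using assms by (split if_split)+ arith
qed

lemma forest_add:
  assumes sym: "\<forall>a b. adj a b \<longrightarrow> adj b a" and forest: "forest_on X adj" and vX: "v \<notin> X"
    and H: "\<forall>a b. a \<in> X \<longrightarrow> b \<in> X \<longrightarrow> adj v a \<longrightarrow> adj v b \<longrightarrow> reach X adj a b \<longrightarrow> a = b"
  shows "forest_on (insert v X) adj"
proof -
  { fix c assume len: "length c \<ge> 3" and dist: "distinct c" and sub: "set c \<subseteq> insert v X"
      and cyc: "\<forall>i<length c. adj (c!i) (c!((i+1) mod length c))"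
    have False
    proof (cases "v \<in> set c")
      case False then have "set c \<subseteq> X" using sub by auto
      then show False using forest len dist cyc unfolding forest_on_def has_cycle_def by blast
    next
      case True
      then obtain k where k: "k < length c" "c!k = v" by (auto simp: in_set_conv_nth)
      define n where "n = length c"
      have n3: "n \<ge> 3" using len n_def by simp
      have kn: "k < n" using k n_def by simp
      define p where "p = map (\<lambda>j. c!((k+1+j) mod n)) [0..<n-1]"
      have lp: "length p = n - 1" by (simp add: p_def)
      have pX: "set p \<subseteq> X"
      proof
        fix x assume "x \<in> set p"
        then obtain j where j: "j < n - 1" "x = c!((k+1+j) mod n)" by (auto simp: p_def)
        have m: "(k+1+j) mod n < n" using n3 by simp
        have "x \<in> set c" using j m n_def by simp
        moreover have "x \<noteq> v"
        proof
          assume "x = v"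
          then have "c!((k+1+j) mod n) = c!k" using j k by simp
          moreover have mc: "(k+1+j) mod n < length c" using m n_def by simp
          ultimately have "(k+1+j) mod n = k" using nth_eq_iff_index_eq[OF dist mc k(1)] by simp
          then show False using mod_ne_aux[OF kn n3 j(1)] by simp
        qed
        ultimately show "x \<in> X" using sub by auto
      qed
      have walk: "walk_in X adj p" unfolding walk_in_def
      proof (intro conjI allI impI)
        show "p \<noteq> []" using lp n3 by auto
        show "set p \<subseteq> X" by (rule pX)
        fix i assume i: "Suc i < length p"
        define m where "m = (k+1+i) mod n"
        have mn: "m < n" using n3 m_def by simp
        have "adj (c!m) (c!((m+1) mod n))" using cyc mn n_def by simp
        moreover have "(m+1) mod n = (k+1+Suc i) mod n" unfolding m_def by (simp add: mod_Suc_eq)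
        ultimately show "adj (p ! i) (p ! Suc i)" using i lp unfolding p_def m_def by simp
      qed
      define a where "a = c!((k+1) mod n)"
      define b where "b = c!((k+n-1) mod n)"
      have hp: "hd p = a" unfolding p_def a_def using n3 by (simp add: hd_map)
      have lpb: "last p = b"
      proof -
        have pne: "p \<noteq> []" using lp n3 by auto
        have "length p - 1 = n - 2" using lp by simp
        then have "last p = p ! (n - 2)" using pne by (simp add: last_conv_nth)
        also have "\<dots> = c!((k+1+(n-2)) mod n)"
        proof -
          have "n - 2 < n - 1" using n3 by simp
          then show ?thesis unfolding p_def by (simp only: nth_map length_upt nth_upt) simp
        qed
        also have "k+1+(n-2) = k+n-1" using n3 by simp
        finally show ?thesis unfolding b_def .
      qed
      have "adj (c!k) (c!((k+1) mod length c))" using cyc k(1) by blast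
      then have "adj v a" using k(2) n_def unfolding a_def by simp
      moreover have "adj v b"
      proof -
        define m where "m = (k+n-1) mod n"
        have mn: "m < n" using n3 m_def by simp
        have "adj (c!m) (c!((m+1) mod n))" using cyc mn n_def by simp
        moreover have "(m+1) mod n = k"
        proof -
          have "(m+1) mod n = (k+n-1+1) mod n" unfolding m_def by (simp add: mod_Suc_eq)
          also have "k+n-1+1 = k + n" using n3 by simp
          finally show ?thesis using kn by simp
        qed
        ultimately have "adj (c!m) v" using k(2) by simp
        then have "adj v (c!m)" using sym by blast
        then show ?thesis unfolding b_def m_def .
      qed
      moreover have "a \<in> X" "b \<in> X"
      proof -
        have pne: "p \<noteq> []" using lp n3 by auto
        have "hd p \<in> set p" "last p \<in> set p" using pne by simp_all
        then show "a \<in> X" "b \<in> X" using pX hp lpb by auto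
      qed
      moreover have "reach X adj a b" unfolding reach_def using walk hp lpb by blast
      ultimately have "a = b" using H by blast
      moreover have i1: "(k + 1) mod n < length c" and i2: "(k+n-1) mod n < length c"
      proof -
        have "0 < length c" using n3 n_def by linarith
        then show "(k + 1) mod n < length c" "(k+n-1) mod n < length c" unfolding n_def by simp_all
      qed
      ultimately have "(k + 1) mod n = (k+n-1) mod n"
        using nth_eq_iff_index_eq[OF dist i1 i2] unfolding a_def b_def by simp
      then show False using mod_ne_aux2[OF kn n3] by simp
    qed }
  then show ?thesis unfolding forest_on_def has_cycle_def by blast
qed

lemma forest_sub: "forest_on X adj \<Longrightarrow> Y \<subseteq> X \<Longrightarrow> forest_on Y adj"
  unfolding forest_on_def has_cycle_def by (meson order_trans)


theorem lemma28:
  fixes V :: "'a set" and adj :: "'a \<Rightarrow> 'a \<Rightarrow> bool" and F :: "'a set"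
    and B :: "'a hvert \<Rightarrow> 'a hvert \<Rightarrow> bool" and r v x' :: "'a hvert"
    and T :: "'a set" and u1 u2 :: 'a
  assumes "simple_graph V adj" and "connected_on V adj"
    and "min_comp_max_forest V adj F"
    and "lex_highest_skeleton V adj F B r"
    and "v \<in> NonTreeV ` (V - F)" and "v \<in> inner_verts V adj F B"
    and "T \<in> components F adj" and "T = {u1, u2}" and "u1 \<noteq> u2" and "adj u1 u2"
    and "{w \<in> inner_verts V adj F B. B v w} = {TreeV T, x'}" and "x' \<noteq> TreeV T"
    and "\<forall>C \<in> components F adj. C \<noteq> T \<longrightarrow> \<not> two_edge V adj F v (TreeV C)"
  shows "\<forall>C \<in> components F adj. C \<noteq> T \<longrightarrow> \<not> Hadj V adj F v (TreeV C)"
proof (intro ballI impI notI)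
  fix C0 assume C0: "C0 \<in> components F adj" and C0T: "C0 \<noteq> T" and HC0: "Hadj V adj F v (TreeV C0)"
  note sg = assms(1) and mc = assms(3) and Tc = assms(7) and Teq = assms(8) and u12 = assms(9)
    and no2 = assms(13)
  obtain s where vs: "v = NonTreeV s" and sVF: "s \<in> V - F" using assms(5) by auto
  have sym: "\<forall>a b. adj a b \<longrightarrow> adj b a" using sg by (simp add: simple_graph_def)
  have finV: "finite V" using sg by (simp add: simple_graph_def)
  have mif: "max_induced_forest V adj F" using mc by (simp add: min_comp_max_forest_def)
  have FV: "F \<subseteq> V" and forF: "forest_on F adj"
    using mif by (auto simp: max_induced_forest_def induced_forest_def)
  have finF: "finite F" using FV finV finite_subset by blast
  have maxF: "\<And>F'. induced_forest V adj F' \<Longrightarrow> card F' \<le> card F"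
    using mif by (simp add: max_induced_forest_def)
  have minc: "\<And>F'. max_induced_forest V adj F' \<Longrightarrow> card (components F adj) \<le> card (components F' adj)"
    using mc by (simp add: min_comp_max_forest_def)
  have compsF: "\<And>C. C \<in> components F adj \<Longrightarrow> C \<subseteq> F"
    by (auto simp: components_eq comp_def)
  have u1F: "u1 \<in> F" and u2F: "u2 \<in> F" using compsF[OF Tc] Teq by auto
  have sF: "s \<notin> F" and sV: "s \<in> V" using sVF by auto
  have sN: "\<And>C a b. C \<in> components F adj \<Longrightarrow> C \<noteq> T \<Longrightarrow> a \<in> C \<Longrightarrow> b \<in> C \<Longrightarrow> adj s a \<Longrightarrow> adj s b \<Longrightarrow> a = b"
  proof (rule ccontr)
    fix C a b assume C: "C \<in> components F adj" "C \<noteq> T" and ab: "a \<in> C" "b \<in> C" "adj s a" "adj s b" "a \<noteq> b"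
    have finC: "finite C" using compsF[OF C(1)] finF finite_subset by blast
    have "{a, b} \<subseteq> {w \<in> C. adj s w}" using ab by auto
    then have "card {a, b} \<le> card {w \<in> C. adj s w}" using finC by (intro card_mono) auto
    then have "2 \<le> card {w \<in> C. adj s w}" using ab by simp
    then have "two_edge V adj F v (TreeV C)" using vs sVF C ab by auto
    then show False using no2 C by blast
  qed
  have Hsub: "\<forall>a b. a \<in> X \<longrightarrow> b \<in> X \<longrightarrow> adj s a \<longrightarrow> adj s b \<longrightarrow> reach X adj a b \<longrightarrow> a = b"
    if XF: "X \<subseteq> F" and Tcond: "\<And>a b. a \<in> T \<inter> X \<Longrightarrow> b \<in> T \<inter> X \<Longrightarrow> adj s a \<Longrightarrow> adj s b \<Longrightarrow> a = b" for X
  proof (intro allI impI)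
    fix a b assume ab: "a \<in> X" "b \<in> X" "adj s a" "adj s b" "reach X adj a b"
    have r: "reach F adj a b" using reach_mono[OF ab(5) XF] .
    define C where "C = comp F adj a"
    have aF: "a \<in> F" using ab XF by auto
    have CC: "C \<in> components F adj" using aF by (simp add: components_eq C_def)
    have aC: "a \<in> C" using aF by (simp add: C_def comp_self)
    have bC: "b \<in> C" using r reach_in[OF r] by (simp add: C_def comp_def)
    show "a = b"
    proof (cases "C = T")
      case True
      then have "a \<in> T \<inter> X" "b \<in> T \<inter> X" using aC bC ab(1,2) by auto
      then show ?thesis using Tcond[OF _ _ ab(3) ab(4)] by simp
    next
      case False show ?thesis using sN[OF CC False aC bC ab(3) ab(4)] .
    qed
  qed
  have su2: "adj s u2"
  proof (rule ccontr)
    assume nu2: "\<not> adj s u2"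
    have "forest_on (insert s F) adj"
    proof (rule forest_add[OF sym forF sF])
      show "\<forall>a b. a \<in> F \<longrightarrow> b \<in> F \<longrightarrow> adj s a \<longrightarrow> adj s b \<longrightarrow> reach F adj a b \<longrightarrow> a = b"
        using nu2 Teq by (intro Hsub) auto
    qed
    then have "induced_forest V adj (insert s F)" using FV sV by (simp add: induced_forest_def)
    then have "card (insert s F) \<le> card F" by (rule maxF)
    then show False using finF sF by simp
  qed
  define F' where "F' = insert s (F - {u1})"
  have forF': "forest_on F' adj" unfolding F'_def
  proof (rule forest_add[OF sym])
    show "forest_on (F - {u1}) adj" using forF forest_sub by blast
    show "s \<notin> F - {u1}" using sF by simp
    show "\<forall>a b. a \<in> F - {u1} \<longrightarrow> b \<in> F - {u1} \<longrightarrow> adj s a \<longrightarrow> adj s b \<longrightarrow> reach (F - {u1}) adj a b \<longrightarrow> a = b"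
      using Teq by (intro Hsub) auto
  qed
  have indF': "induced_forest V adj F'" using forF' FV sV by (auto simp: induced_forest_def F'_def)
  have cardF': "card F' = card F"
  proof -
    have "card F' = Suc (card (F - {u1}))" unfolding F'_def using finF sF by (simp add: card_insert_if)
    also have "\<dots> = card F" using card_Suc_Diff1[OF finF u1F] .
    finally show ?thesis .
  qed
  have "max_induced_forest V adj F'" using indF' maxF cardF' by (simp add: max_induced_forest_def)
  then have le: "card (components F adj) \<le> card (components F' adj)" by (rule minc)
  have CsubF': "C \<subseteq> F'" if C: "C \<in> components F adj" "C \<noteq> T" for C
  proof
    fix x assume x: "x \<in> C"
    have "x \<noteq> u1"
    proof
      assume "x = u1"
      then have "C = comp F adj u1" using comp_mem[OF sym C(1)] x by simp
      moreover have "T = comp F adj u1" using comp_mem[OF sym Tc] Teq by simp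
      ultimately show False using C by simp
    qed
    then show "x \<in> F'" using x compsF[OF C(1)] by (auto simp: F'_def)
  qed
  have reachC: "reach F' adj x y" if C: "C \<in> components F adj" "C \<noteq> T" and xy: "x \<in> C" "y \<in> C" for C x y
  proof -
    have Ce: "C = comp F adj x" using comp_mem[OF sym C(1) xy(1)] .
    then have "reach F adj x y" using xy by (simp add: comp_def)
    then show ?thesis using reach_restrict CsubF'[OF C] Ce by metis
  qed
  have nonempty: "C \<noteq> {}" if Cc: "C \<in> components F adj" for C
  proof -
    obtain x where x: "x \<in> F" "C = comp F adj x" using Cc by (auto simp: components_eq)
    then show ?thesis using comp_self[of x F adj] by auto
  qed
  define rep where "rep C = (if C = T then u2 else (SOME w. w \<in> C))" for C
  have repC: "rep C \<in> C" if "C \<in> components F adj" for C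
    using nonempty[OF that] Teq by (auto simp: rep_def some_in_eq)
  have u2F': "u2 \<in> F'" and sF': "s \<in> F'" using u2F u12 by (auto simp: F'_def)
  have repF': "rep C \<in> F'" if C: "C \<in> components F adj" for C
  proof (cases "C = T")
    case True then show ?thesis using u2F' by (simp add: rep_def)
  next
    case False then show ?thesis using CsubF' C repC by blast
  qed
  define g where "g C = comp F' adj (rep C)" for C
  have finc: "finite (components F adj)" using finF by (simp add: components_eq)
  have img: "g ` components F adj = components F' adj"
  proof
    show "g ` components F adj \<subseteq> components F' adj"
      using repF' by (auto simp: g_def components_eq)
  next
    show "components F' adj \<subseteq> g ` components F adj"
    proof
      fix D assume "D \<in> components F' adj"
      then obtain w where w: "w \<in> F'" "D = comp F' adj w" by (auto simp: components_eq)
      have gT: "g T = comp F' adj u2" by (simp add: g_def rep_def)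
      show "D \<in> g ` components F adj"
      proof (cases "w = s")
        case True
        have "reach F' adj s u2" using su2 sF' u2F' by (rule reach_edge)
        then have "D = g T" using comp_eq[OF sym] w True gT by metis
        then show ?thesis using Tc by blast
      next
        case False
        then have wF: "w \<in> F" "w \<noteq> u1" using w by (auto simp: F'_def)
        define C where "C = comp F adj w"
        have CC: "C \<in> components F adj" using wF by (simp add: components_eq C_def)
        have wC: "w \<in> C" using wF by (simp add: C_def comp_self)
        show ?thesis
        proof (cases "C = T")
          case True
          then have "w = u2" using wC wF Teq by auto
          then have "D = g T" using w gT by simp
          then show ?thesis using Tc by blast
        next
          case CT: False
          have "reach F' adj w (rep C)" using reachC[OF CC CT wC repC[OF CC]] .
          then have "D = g C" using comp_eq[OF sym] w by (simp add: g_def)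
          then show ?thesis using CC by blast
        qed
      qed
    qed
  qed
  have "g C0 = g T"
  proof -
    obtain w0 where w0: "w0 \<in> C0" "adj s w0" using HC0 vs by auto
    have r1: "reach F' adj (rep C0) w0" using reachC[OF C0 C0T repC[OF C0] w0(1)] .
    have w0F': "w0 \<in> F'" using CsubF'[OF C0 C0T] w0 by blast
    have r2: "reach F' adj w0 s" using sym w0 w0F' sF' by (meson reach_edge)
    have r3: "reach F' adj s u2" using su2 sF' u2F' by (rule reach_edge)
    have "reach F' adj (rep C0) u2" using reach_trans[OF reach_trans[OF r1 r2] r3] .
    then show ?thesis using comp_eq[OF sym] by (simp add: g_def rep_def C0T)
  qed
  then have "\<not> inj_on g (components F adj)" using C0 C0T Tc by (meson inj_on_def)
  then have "card (g ` components F adj) \<noteq> card (components F adj)"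
    using eq_card_imp_inj_on finc by blast
  moreover have "card (g ` components F adj) \<le> card (components F adj)"
    using finc by (rule card_image_le)
  ultimately show False using le img by simp
qed

end
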